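(* Let $X\in\mathbb{R}^{n\times p}$, $B^*\in\mathbb{R}^{p\times q}$, $\sigma^*>0$, $E\in\mathbb{R}^{n\times q}$ and $Y=XB^*+E$. Let $\lambda>0$, $0<\sigma_{\min}\le\sigma^*/\sqrt2$, and let $\eta>0$ satisfy $\lambda\|B^*\|_{2,1}\le\eta\sigma^*$. Suppose $E$ lies in the event $$\mathcal A_1=\Big\{\frac{\|X^\top E\|_{2,\infty}}{\sqrt{nq}\|E\|_F}\le\frac\lambda2\Big\}\cap\Big\{\frac{\sigma^*}{\sqrt2}<\frac{\|E\|_F}{\sqrt{nq}}<2\sigma^*\Big\}.$$ Let $(\hat B,\hat\sigma)$ be a minimizer over $B\in\mathbb{R}^{p\times q}$, $\sigma\ge\sigma_{\min}$ of $\frac{1}{2nq\sigma}\|Y-XB\|_F^2+\frac\sigma2+\lambda\|B\|_{2,1}$, and $\hat E=Y-X\hat B$. Then $$\tfrac{1}{\sqrt{nq}}\|\hat E\|_F\le(2+\eta)\sigma^*.$$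
   Context: $\|M\|_{2,1}=\sum_j\|M_{j:}\|_2$ and $\|M\|_{2,\infty}=\max_j\|M_{j:}\|_2$ over rows $M_{j:}$; $\|\cdot\|_F$ is the Frobenius norm. *)

theory Defs
  imports "HOL-Analysis.Analysis"
begin

text \<open>Matrices with n rows and m columns are represented as real^'m^'n;
  row j of M is M $ j, a vector whose norm is the Euclidean 2-norm.\<close>

definition norm21 :: "real^'m^'n \<Rightarrow> real" where
  "norm21 M = (\<Sum>j\<in>UNIV. norm (M $ j))"

definition norm2inf :: "real^'m^'n \<Rightarrow> real" where
  "norm2inf M = Max (range (\<lambda>j. norm (M $ j)))"

definition frob :: "real^'m^'n \<Rightarrow> real" where
  "frob M = sqrt (\<Sum>i\<in>UNIV. \<Sum>j\<in>UNIV. (M $ i $ j)^2)"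

definition sqlasso_obj ::
  "real^'p^'n \<Rightarrow> real^'q^'n \<Rightarrow> real \<Rightarrow> real^'q^'p \<Rightarrow> real \<Rightarrow> real" where
  "sqlasso_obj X Y lam B \<sigma> =
     (frob (Y - X ** B))^2 / (2 * real CARD('n) * real CARD('q) * \<sigma>) + \<sigma> / 2 + lam * norm21 B"

end

theory Submission
  imports Defs
begin

lemma norm21_nonneg: "norm21 M \<ge> 0"
  unfolding norm21_def by (simp add: sum_nonneg)

theorem lemma5:
  fixes X :: "real^'p^'n" and Bstar :: "real^'q^'p" and E :: "real^'q^'n"
    and Y :: "real^'q^'n" and Bhat :: "real^'q^'p"
    and \<sigma>star lam \<sigma>min \<eta> \<sigma>hat :: real
  assumes sig_pos: "\<sigma>star > 0"
    and Y_def: "Y = X ** Bstar + E"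
    and lam_pos: "lam > 0"
    and smin_pos: "0 < \<sigma>min" and smin_le: "\<sigma>min \<le> \<sigma>star / sqrt 2"
    and eta_pos: "\<eta> > 0" and eta_bound: "lam * norm21 Bstar \<le> \<eta> * \<sigma>star"
    and A1a: "norm2inf (transpose X ** E) / (sqrt (real CARD('n) * real CARD('q)) * frob E) \<le> lam / 2"
    and A1b: "\<sigma>star / sqrt 2 < frob E / sqrt (real CARD('n) * real CARD('q))"
    and A1c: "frob E / sqrt (real CARD('n) * real CARD('q)) < 2 * \<sigma>star"
    and hat_feas: "\<sigma>hat \<ge> \<sigma>min"
    and hat_min: "\<And>B \<sigma>. \<sigma> \<ge> \<sigma>min \<Longrightarrow>
        sqlasso_obj X Y lam Bhat \<sigma>hat \<le> sqlasso_obj X Y lam B \<sigma>"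
  shows "frob (Y - X ** Bhat) / sqrt (real CARD('n) * real CARD('q)) \<le> (2 + \<eta>) * \<sigma>star"
proof -
  define N where "N = real CARD('n) * real CARD('q)"
  define s where "s = sqrt N"
  have Npos: "N > 0" unfolding N_def by simp
  have spos: "s > 0" unfolding s_def using Npos by simp
  have s2: "s^2 = N" unfolding s_def using Npos by simp
  define e where "e = frob E / s"
  define F where "F = frob (Y - X ** Bhat)"
  define a where "a = F / s"
  have "\<sigma>star / sqrt 2 > 0" using sig_pos by simp
  hence epos: "e > 0" using A1b unfolding e_def s_def N_def by linarith
  have emin: "e \<ge> \<sigma>min" using A1b smin_le unfolding e_def s_def N_def by linarith
  have ebd: "e < 2 * \<sigma>star" using A1c unfolding e_def s_def N_def by simp
  have YE: "Y - X ** Bstar = E" by (simp add: Y_def)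
  have FE2: "(frob E)^2 = e^2 * N" unfolding e_def using spos s2 Npos
    by (simp add: power_divide)
  have obj1: "sqlasso_obj X Y lam Bstar e = e + lam * norm21 Bstar"
    unfolding sqlasso_obj_def YE FE2 N_def[symmetric] using epos Npos N_def
    by (simp add: field_simps power2_eq_square)
  have sh: "\<sigma>hat > 0" using hat_feas smin_pos by linarith
  have F2: "F^2 = a^2 * N" unfolding a_def using spos s2 Npos by (simp add: power_divide)
  have "sqlasso_obj X Y lam Bhat \<sigma>hat \<ge> a^2/(2*\<sigma>hat) + \<sigma>hat/2"
    unfolding sqlasso_obj_def F_def[symmetric] F2 N_def[symmetric]
    using Npos sh lam_pos norm21_nonneg[of Bhat] N_def
    by (simp add: field_simps)
  moreover have "a^2/(2*\<sigma>hat) + \<sigma>hat/2 \<ge> a"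
  proof -
    have "(a - \<sigma>hat)^2 \<ge> 0" by simp
    hence "a^2 + \<sigma>hat^2 \<ge> 2*a*\<sigma>hat" by (simp add: power2_eq_square algebra_simps)
    thus ?thesis using sh by (simp add: field_simps power2_eq_square)
  qed
  moreover have "sqlasso_obj X Y lam Bhat \<sigma>hat \<le> sqlasso_obj X Y lam Bstar e"
    using hat_min emin by blast
  ultimately have "a \<le> e + lam * norm21 Bstar" using obj1 by linarith
  hence "a \<le> (2 + \<eta>) * \<sigma>star" using ebd eta_bound by (simp add: algebra_simps)
  thus ?thesis unfolding a_def F_def s_def N_def .
qed

end
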